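(* Let $f$ be a multiplicative function from the positive integers to the nonnegative integers with $f(p^{k-1})\le f(p^k)$ for all primes $p$ and all integers $k\ge 1$. Then every $f$-practical number is weakly $f$-practical.
   Context: $f$ multiplicative means $f(1)=1$ and $f(ab)=f(a)f(b)$ for coprime $a,b$. $S_f(n)=\sum_{d\mid n} f(d)$. A positive integer $n$ is $f$-practical if every positive integer $m\le S_f(n)$ equals $\sum_{d\in\mathcal{D}}f(d)$ for some set $\mathcal{D}$ of distinct divisors of $n$. Write $n=p_1^{e_1}\cdots p_k^{e_k}$ with distinct primes ordered so that $f(p_1)\le f(p_2)\le\cdots\le f(p_k)$, and let $m_i=\prod_{j=1}^{i}p_j^{e_j}$ for $0\le i<k$ (so $m_0=1$). Then $n$ is called weakly $f$-practical if $f(p_{i+1})\le S_f(m_i)+1$ for every $0\le i<k$. *)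

theory Defs
  imports "HOL-Computational_Algebra.Primes"
begin

definition multiplicative :: "(nat \<Rightarrow> nat) \<Rightarrow> bool" where
  "multiplicative f \<longleftrightarrow> f 1 = 1 \<and>
     (\<forall>a b. a > 0 \<longrightarrow> b > 0 \<longrightarrow> coprime a b \<longrightarrow> f (a * b) = f a * f b)"

definition S_f :: "(nat \<Rightarrow> nat) \<Rightarrow> nat \<Rightarrow> nat" where
  "S_f f n = (\<Sum>d\<in>{d. d dvd n}. f d)"

definition f_practical :: "(nat \<Rightarrow> nat) \<Rightarrow> nat \<Rightarrow> bool" where
  "f_practical f n \<longleftrightarrow> n > 0 \<and>
     (\<forall>m. 1 \<le> m \<and> m \<le> S_f f n \<longrightarrow>
        (\<exists>D. D \<subseteq> {d. d dvd n} \<and> m = (\<Sum>d\<in>D. f d)))"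

text \<open>Weakly f-practical: for an ordering ps of the distinct prime factors of n
  with f(p_1) \<le> ... \<le> f(p_k), and m_i the product of the first i prime powers,
  f(p_{i+1}) \<le> S_f(m_i) + 1. (Required for every such ordering; it is
  independent of the tie-breaking.)\<close>
definition weakly_f_practical :: "(nat \<Rightarrow> nat) \<Rightarrow> nat \<Rightarrow> bool" where
  "weakly_f_practical f n \<longleftrightarrow> n > 0 \<and>
     (\<forall>ps. distinct ps \<and> set ps = prime_factors n \<and> sorted (map f ps) \<longrightarrow>
        (\<forall>i < length ps.
           f (ps ! i) \<le> S_f f (\<Prod>j<i. (ps ! j) ^ multiplicity (ps ! j) n) + 1))"

end

theory Submission
  imports Defs
begin

lemma mono_pow:
  fixes f :: "nat \<Rightarrow> nat"
  assumes "\<And>p k. prime p \<Longrightarrow> k \<ge> 1 \<Longrightarrow> f (p ^ (k - 1)) \<le> f (p ^ k)"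
    and "prime p" and "a \<le> b"
  shows "f (p ^ a) \<le> f (p ^ b)"
  using assms(3)
proof (induction b)
  case 0 then show ?case by simp
next
  case (Suc b)
  have "f (p ^ b) \<le> f (p ^ Suc b)" using assms(1)[OF assms(2), of "Suc b"] by simp
  with Suc show ?case by (cases "a = Suc b") auto
qed

lemma allE2: "\<forall>a b. P a b \<Longrightarrow> P x y" by blast
lemma mp3: "A \<longrightarrow> B \<longrightarrow> C \<longrightarrow> D \<Longrightarrow> A \<Longrightarrow> B \<Longrightarrow> C \<Longrightarrow> D" by blast

lemma decomp:
  fixes d p :: nat
  assumes "d > 0" "prime p"
  obtains k r where "d = p ^ k * r" "\<not> p dvd r" "r > 0" "coprime (p ^ k) r"
proof -
  obtain r where r: "d = p ^ multiplicity p d * r" "\<not> p dvd r"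
  proof (rule multiplicity_decompose'[of d p])
    show "d \<noteq> 0" using assms(1) by simp
    show "\<not> is_unit p" using assms(2) not_prime_unit by blast
  qed
  have "r \<noteq> 0" using r(2) by (rule contrapos_nn) simp
  hence "r > 0" by simp
  moreover have "coprime (p ^ multiplicity p d) r"
  proof -
    have "coprime p r" using prime_imp_coprime[OF assms(2) r(2)] .
    thus ?thesis using coprime_power_left_iff by blast
  qed
  ultimately show ?thesis by (rule that[OF r(1) r(2)])
qed

lemma f_split:
  fixes f :: "nat \<Rightarrow> nat"
  assumes mf: "multiplicative f" and "prime p" "r > 0" "coprime (p ^ k) r"
  shows "f (p ^ k * r) = f (p ^ k) * f r"
proof -
  have "p ^ k > 0" using assms(2) by (simp add: prime_gt_0_nat)
  have "\<forall>a b. a > 0 \<longrightarrow> b > 0 \<longrightarrow> coprime a b \<longrightarrow> f (a * b) = f a * f b"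
    using mf unfolding multiplicative_def by (rule conjunct2)
  hence "p ^ k > 0 \<longrightarrow> r > 0 \<longrightarrow> coprime (p ^ k) r \<longrightarrow> f (p ^ k * r) = f (p ^ k) * f r"
    by (rule allE2)
  thus ?thesis using \<open>p ^ k > 0\<close> assms(3,4) by (rule mp3)
qed

lemma f_pos:
  fixes f :: "nat \<Rightarrow> nat"
  assumes mf: "multiplicative f"
    and mon: "\<And>p k. prime p \<Longrightarrow> k \<ge> 1 \<Longrightarrow> f (p ^ (k - 1)) \<le> f (p ^ k)"
  shows "d > 0 \<Longrightarrow> f d \<ge> 1"
proof (induction d rule: less_induct)
  case (less d)
  show ?case
  proof (cases "d = 1")
    case True then show ?thesis using mf by (simp add: multiplicative_def)
  next
    case False
    then obtain p where p: "prime p" "p dvd d" using prime_factor_nat by blast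
    obtain k r where r: "d = p ^ k * r" "\<not> p dvd r" "r > 0" "coprime (p ^ k) r"
      by (rule decomp[OF less.prems p(1)])
    have k0: "k \<noteq> 0"
    proof
      assume "k = 0"
      hence "d = r" using r(1) by simp
      thus False using r(2) p(2) by simp
    qed
    have pk: "p ^ k > 1" using one_less_power[OF prime_gt_1_nat[OF p(1)], of k] k0 by simp
    have "r < p ^ k * r" using pk r(3) by simp
    hence "r < d" using r(1) by simp
    hence fr: "f r \<ge> 1" using less.IH r(3) by blast
    have "f (p ^ 0) \<le> f (p ^ k)" using mono_pow[OF mon p(1), of 0 k] by simp
    hence "f (p ^ k) \<ge> 1" using mf by (simp add: multiplicative_def)
    moreover have "f d = f (p ^ k) * f r"
      using f_split[OF mf p(1) r(3) r(4)] r(1) by simp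
    ultimately show ?thesis using fr by simp
  qed
qed

lemma f_ge_prime:
  fixes f :: "nat \<Rightarrow> nat"
  assumes mf: "multiplicative f"
    and mon: "\<And>p k. prime p \<Longrightarrow> k \<ge> 1 \<Longrightarrow> f (p ^ (k - 1)) \<le> f (p ^ k)"
    and "d > 0" "prime p" "p dvd d"
  shows "f p \<le> f d"
proof -
  obtain k r where r: "d = p ^ k * r" "\<not> p dvd r" "r > 0" "coprime (p ^ k) r"
    by (rule decomp[OF assms(3,4)])
  have k0: "k \<noteq> 0"
  proof
    assume "k = 0"
    hence "d = r" using r(1) by simp
    thus False using r(2) assms(5) by simp
  qed
  hence "f (p ^ 1) \<le> f (p ^ k)" using mono_pow[OF mon assms(4), of 1 k] by simp
  hence a: "f p \<le> f (p ^ k)" by simp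
  have b: "f r \<ge> 1" using f_pos[OF mf mon r(3)] .
  have c: "f d = f (p ^ k) * f r"
    using f_split[OF mf assms(4) r(3) r(4)] r(1) by simp
  have "f (p ^ k) \<le> f (p ^ k) * f r" using b by simp
  thus ?thesis using a c by linarith
qed

theorem theorem2p2:
  fixes f :: "nat \<Rightarrow> nat"
  assumes "multiplicative f"
    and "\<And>p k. prime p \<Longrightarrow> k \<ge> 1 \<Longrightarrow> f (p ^ (k - 1)) \<le> f (p ^ k)"
    and "f_practical f n"
  shows "weakly_f_practical f n"
  unfolding weakly_f_practical_def
proof (intro conjI allI impI)
  note mf = assms(1) and mon = assms(2)
  show n0: "n > 0" using assms(3) by (simp add: f_practical_def)
  fix ps i
  assume ps: "distinct ps \<and> set ps = prime_factors n \<and> sorted (map f ps)"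
    and i: "i < length ps"
  define P where "P = (!) ps ` {..<i}"
  define M where "M = (\<Prod>q\<in>P. q ^ multiplicity q n)"
  have injP: "inj_on ((!) ps) {..<i}" using ps i
    by (auto simp: inj_on_def nth_eq_iff_index_eq)
  have Meq: "(\<Prod>j<i. (ps ! j) ^ multiplicity (ps ! j) n) = M"
    unfolding M_def P_def by (simp add: prod.reindex[OF injP])
  have sps: "set ps = prime_factors n" using ps by blast
  have "P \<subseteq> set ps" unfolding P_def using i by auto
  hence Psub: "P \<subseteq> prime_factors n" using sps by simp
  have finP: "finite P" unfolding P_def by simp
  have Pprime: "\<And>x. x \<in> P \<Longrightarrow> prime x" using Psub by auto
  have multM: "\<And>q. prime q \<Longrightarrow> multiplicity q M = (if q \<in> P then multiplicity q n else 0)"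
    unfolding M_def by (rule multiplicity_prod_prime_powers[OF finP Pprime])
  have M0: "M > 0" unfolding M_def using Pprime by (auto intro!: prod_pos simp: prime_gt_0_nat)
  have Mdvd: "M dvd n"
  proof (rule multiplicity_le_imp_dvd)
    show "M \<noteq> 0" using M0 by simp
    fix p :: nat assume "prime p"
    then show "multiplicity p M \<le> multiplicity p n" using multM[of p] by simp
  qed
  define q where "q = ps ! i"
  have qpf: "q \<in> prime_factors n" using sps i unfolding q_def by (metis nth_mem)
  hence qprime: "prime q" and qdvd: "q dvd n" by auto
  have qnP: "q \<notin> P" proof
    assume "q \<in> P"
    then obtain j where "j < i" "ps ! j = ps ! i" unfolding P_def q_def by auto
    with ps i show False by (simp add: nth_eq_iff_index_eq)
  qed
  have qnM: "\<not> q dvd M"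
    using multM[OF qprime] qnP M0
      prime_multiplicity_gt_zero_iff[OF prime_imp_prime_elem[OF qprime], of M] by simp
  show "f (ps ! i) \<le> S_f f (\<Prod>j<i. (ps ! j) ^ multiplicity (ps ! j) n) + 1"
  proof (rule ccontr)
    assume "\<not> ?thesis"
    hence big: "f q > S_f f M + 1" unfolding Meq q_def by simp
    define m where "m = S_f f M + 1"
    have finN: "finite {d. d dvd n}" using n0 by simp
    have "S_f f M + f q = sum f ({d. d dvd M} \<union> {q})"
      using qnM M0 by (simp add: S_f_def)
    also have "\<dots> \<le> S_f f n" unfolding S_f_def
      by (rule sum_mono2[OF finN]) (use Mdvd qdvd in \<open>auto intro: dvd_trans\<close>)
    finally have "m \<le> S_f f n" unfolding m_def using big by simp
    then obtain D where D: "D \<subseteq> {d. d dvd n}" "m = sum f D"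
    proof -
      have "\<forall>m. 1 \<le> m \<and> m \<le> S_f f n \<longrightarrow> (\<exists>D. D \<subseteq> {d. d dvd n} \<and> m = sum f D)"
        using assms(3) unfolding f_practical_def by blast
      moreover have "1 \<le> m" unfolding m_def by simp
      ultimately show ?thesis using \<open>m \<le> S_f f n\<close> that by blast
    qed
    have finD: "finite D" using finite_subset[OF D(1) finN] .
    have DM: "D \<subseteq> {d. d dvd M}"
    proof
      fix d assume dD: "d \<in> D"
      have dn: "d dvd n" using dD D(1) by auto
      have d0: "d > 0" using dn n0 by (simp add: dvd_pos_nat)
      show "d \<in> {d. d dvd M}"
      proof (rule ccontr)
        assume nd: "d \<notin> {d. d dvd M}"
        have "\<exists>r. prime r \<and> \<not> multiplicity r d \<le> multiplicity r M"
          using multiplicity_le_imp_dvd[of d M] nd d0 by auto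
        then obtain r where r: "prime r" "multiplicity r d > multiplicity r M" by auto
        have "multiplicity r d > 0" using r by simp
        hence rd: "r dvd d" using d0
          prime_multiplicity_gt_zero_iff[OF prime_imp_prime_elem[OF r(1)], of d] by simp
        hence "r \<in> prime_factors n" using r(1) dn n0 dvd_trans[OF rd dn]
          by (simp add: in_prime_factors_iff)
        hence "r \<in> set ps" using sps by simp
        then obtain j where j: "j < length ps" "r = ps ! j" by (auto simp: in_set_conv_nth)
        have mrn: "multiplicity r d \<le> multiplicity r n" using dvd_imp_multiplicity_le[OF dn] n0 by simp
        have "r \<notin> P"
        proof
          assume "r \<in> P"
          hence "multiplicity r M = multiplicity r n" using multM[OF r(1)] by simp
          thus False using mrn r(2) by linarith
        qed
        have ij: "i \<le> j"
        proof (rule ccontr)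
          assume "\<not> i \<le> j"
          hence "j < i" by simp
          hence "r \<in> P" unfolding P_def using j(2) by blast
          thus False using \<open>r \<notin> P\<close> by blast
        qed
        have "map f ps ! i \<le> map f ps ! j"
          by (rule sorted_nth_mono) (use ps j ij in auto)
        hence "f q \<le> f r" using i j unfolding q_def by simp
        also have "f r \<le> f d" using f_ge_prime[OF mf mon d0 r(1) rd] .
        also have "f d \<le> sum f D" by (rule member_le_sum[OF dD _ finD]) simp
        finally show False using big D(2) unfolding m_def by simp
      qed
    qed
    have "sum f D \<le> S_f f M" unfolding S_f_def
      by (rule sum_mono2) (use M0 DM in simp_all)
    thus False using D(2) unfolding m_def by simp
  qed
qed

end
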